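(* Suppose $r_{\min}<1$ and $\eta>\frac{r_{\min}}2$, and let $\underline\omega_\eta=\min\{\omega_i:r_i<2\eta\}$. For any constant $\varepsilon>0$ let $c_\varepsilon=\min\big\{\frac{n\eta}{(n-1)\underline\omega_\eta}-\varepsilon,\ n\eta-\varepsilon,\ 1\big\}$. Then the set $E_{c_\varepsilon}=\{(x_1,\dots,x_n)\in[0,1]^n:\max_{i,j\in\mathcal V}|x_i-x_j|\ge c_\varepsilon\}$ is finite-time robustly reachable from $[0,1]^n$ under control protocol (C3).
   Context: Fix $n\ge3$, $\mathcal V=\{1,\dots,n\}$, confidence thresholds $r_i\in(0,1]$, $r_{\min}=\min_ir_i$, belief factors $\omega_i\in(0,1)$, $\eta>0$. States $x(t)\in[0,1]^n$. Neighbor set $\mathcal N_i(t)=\{j:|x_j(t)-x_i(t)|\le r_i\}$ (contains $i$), $\Pi_{[0,1]}(y)=\min\{1,\max\{0,y\}\}$, $x_{\rm ave}(t)=\frac1n\sum_ix_i(t)$. Control protocol (C3): $x_i(t+1)=\Pi_{[0,1]}\big(\omega_ix_{\rm ave}(t)+\frac{1-\omega_i}{|\mathcal N_i(t)|}\sum_{j\in\mathcal N_i(t)}x_j(t)+u_i(t)+b_i(t)\big)$, where $\delta_i(t)\in(0,\eta)$ is a chosen parameter, $u_i(t)\in[-\eta+\delta_i(t),\eta-\delta_i(t)]$ a chosen control input, $b_i(t)\in[-\delta_i(t),\delta_i(t)]$ an arbitrary uncertainty; $\delta_i(t),u_i(t)$ may depend on $x(0),\dots,x(t)$. A set $S\subseteq[0,1]^n$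 is finite-time robustly reachable from $[0,1]^n$ under the protocol if there exist constants $T>0$ and $\varepsilon'\in(0,\eta)$, independent of $x(0)$, such that for every $x(0)\in[0,1]^n$, either $x(0)\in S$, or one can choose $\delta_i(t)\in[\varepsilon',\eta)$ and $u_i(t)\in[-\eta+\delta_i(t),\eta-\delta_i(t)]$ for $i\in\mathcal V$, $0\le t<T$, guaranteeing that for arbitrary $b_i(t)\in[-\delta_i(t),\delta_i(t)]$ there is $t\in[1,T]$ with $x(t)\in S$. *)

theory Defs
  imports Complex_Main
begin

text \<open>Agents are indexed by 0..<n (the paper uses 1..n). States are functions
  nat => real; only the components i < n are meaningful.\<close>

definition proj01 :: "real \<Rightarrow> real" where
  "proj01 y = min 1 (max 0 y)"

definition x_ave :: "nat \<Rightarrow> (nat \<Rightarrow> real) \<Rightarrow> real" where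
  "x_ave n x = (\<Sum>j<n. x j) / real n"

definition nbrs :: "nat \<Rightarrow> (nat \<Rightarrow> real) \<Rightarrow> (nat \<Rightarrow> real) \<Rightarrow> nat \<Rightarrow> nat set" where
  "nbrs n r x i = {j. j < n \<and> \<bar>x j - x i\<bar> \<le> r i}"

definition c3_step :: "nat \<Rightarrow> (nat \<Rightarrow> real) \<Rightarrow> (nat \<Rightarrow> real) \<Rightarrow> (nat \<Rightarrow> real)
    \<Rightarrow> (nat \<Rightarrow> real) \<Rightarrow> (nat \<Rightarrow> real) \<Rightarrow> (nat \<Rightarrow> real)" where
  "c3_step n r \<omega> x u b = (\<lambda>i. proj01 (\<omega> i * x_ave n x
      + (1 - \<omega> i) / real (card (nbrs n r x i)) * (\<Sum>j\<in>nbrs n r x i. x j)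
      + u i + b i))"

text \<open>A (feedback) strategy maps the history [x(0),...,x(t)] to the pair
  (delta(t), u(t)). The trajectory history up to time t, driven by the
  uncertainty sequence b (b t i = b_i(t)).\<close>
type_synonym strategy = "(nat \<Rightarrow> real) list \<Rightarrow> (nat \<Rightarrow> real) \<times> (nat \<Rightarrow> real)"

fun c3_hist :: "nat \<Rightarrow> (nat \<Rightarrow> real) \<Rightarrow> (nat \<Rightarrow> real) \<Rightarrow> strategy
    \<Rightarrow> (nat \<Rightarrow> nat \<Rightarrow> real) \<Rightarrow> (nat \<Rightarrow> real) \<Rightarrow> nat \<Rightarrow> (nat \<Rightarrow> real) list" where
  "c3_hist n r \<omega> \<sigma> b x0 0 = [x0]"
| "c3_hist n r \<omega> \<sigma> b x0 (Suc t) =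
     (let h = c3_hist n r \<omega> \<sigma> b x0 t
      in h @ [c3_step n r \<omega> (last h) (snd (\<sigma> h)) (b t)])"

definition c3_traj :: "nat \<Rightarrow> (nat \<Rightarrow> real) \<Rightarrow> (nat \<Rightarrow> real) \<Rightarrow> strategy
    \<Rightarrow> (nat \<Rightarrow> nat \<Rightarrow> real) \<Rightarrow> (nat \<Rightarrow> real) \<Rightarrow> nat \<Rightarrow> (nat \<Rightarrow> real)" where
  "c3_traj n r \<omega> \<sigma> b x0 t = last (c3_hist n r \<omega> \<sigma> b x0 t)"

definition in_cube :: "nat \<Rightarrow> (nat \<Rightarrow> real) \<Rightarrow> bool" where
  "in_cube n x \<longleftrightarrow> (\<forall>i<n. 0 \<le> x i \<and> x i \<le> 1)"

text \<open>Admissible strategy: delta_i(t) in [eps', eta), u_i(t) in [-eta+delta_i(t), eta-delta_i(t)].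
  Required on all histories (harmless: values on unreachable histories can be set freely).\<close>
definition admissible_strategy :: "nat \<Rightarrow> real \<Rightarrow> real \<Rightarrow> strategy \<Rightarrow> bool" where
  "admissible_strategy n \<eta> \<epsilon>' \<sigma> \<longleftrightarrow>
     (\<forall>h i. i < n \<longrightarrow> \<epsilon>' \<le> fst (\<sigma> h) i \<and> fst (\<sigma> h) i < \<eta>
        \<and> - \<eta> + fst (\<sigma> h) i \<le> snd (\<sigma> h) i \<and> snd (\<sigma> h) i \<le> \<eta> - fst (\<sigma> h) i)"

definition admissible_uncertainty :: "nat \<Rightarrow> (nat \<Rightarrow> real) \<Rightarrow> (nat \<Rightarrow> real) \<Rightarrow> strategy
    \<Rightarrow> (nat \<Rightarrow> real) \<Rightarrow> nat \<Rightarrow> (nat \<Rightarrow> nat \<Rightarrow> real) \<Rightarrow> bool" where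
  "admissible_uncertainty n r \<omega> \<sigma> x0 T b \<longleftrightarrow>
     (\<forall>t<T. \<forall>i<n. \<bar>b t i\<bar> \<le> fst (\<sigma> (c3_hist n r \<omega> \<sigma> b x0 t)) i)"

definition robustly_reachable :: "nat \<Rightarrow> (nat \<Rightarrow> real) \<Rightarrow> (nat \<Rightarrow> real) \<Rightarrow> real
    \<Rightarrow> (nat \<Rightarrow> real) set \<Rightarrow> bool" where
  "robustly_reachable n r \<omega> \<eta> S \<longleftrightarrow>
     (\<exists>T::nat. \<exists>\<epsilon>'::real. T > 0 \<and> 0 < \<epsilon>' \<and> \<epsilon>' < \<eta> \<and>
        (\<forall>x0. in_cube n x0 \<longrightarrow> x0 \<in> S \<or>
           (\<exists>\<sigma>. admissible_strategy n \<eta> \<epsilon>' \<sigma> \<and>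
              (\<forall>b. admissible_uncertainty n r \<omega> \<sigma> x0 T b \<longrightarrow>
                 (\<exists>t. 1 \<le> t \<and> t \<le> T \<and> c3_traj n r \<omega> \<sigma> b x0 t \<in> S)))))"

definition E_set :: "nat \<Rightarrow> real \<Rightarrow> (nat \<Rightarrow> real) set" where
  "E_set n c = {x. in_cube n x \<and> Max {\<bar>x i - x j\<bar> | i j. i < n \<and> j < n} \<ge> c}"

end

theory Submission imports Defs begin

lemma proj01_mono: "a \<le> b \<Longrightarrow> proj01 a \<le> proj01 b"
  by (simp add: proj01_def)
lemma proj01_range: "0 \<le> proj01 a" "proj01 a \<le> 1" by (simp_all add: proj01_def)
lemma proj01_id: "0 \<le> a \<Longrightarrow> a \<le> 1 \<Longrightarrow> proj01 a = a" by (simp add: proj01_def)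
lemma proj01_le_max: "proj01 a \<le> max 0 a" by (simp add: proj01_def)
lemma proj01_ge_min: "0 \<le> a \<Longrightarrow> min 1 a \<le> proj01 a" by (simp add: proj01_def)
lemma proj01_neg: "a \<le> 0 \<Longrightarrow> proj01 a = 0" by (simp add: proj01_def)
lemma proj01_one: "1 \<le> a \<Longrightarrow> proj01 a = 1" by (simp add: proj01_def)

definition comb :: "nat \<Rightarrow> (nat \<Rightarrow> real) \<Rightarrow> (nat \<Rightarrow> real) \<Rightarrow> (nat \<Rightarrow> real) \<Rightarrow> nat \<Rightarrow> real" where
  "comb n r \<omega> x i = \<omega> i * x_ave n x + (1 - \<omega> i) * ((\<Sum>j\<in>nbrs n r x i. x j) / real (card (nbrs n r x i)))"

lemma step_eq: "c3_step n r \<omega> x u b i = proj01 (comb n r \<omega> x i + u i + b i)"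
  by (simp add: c3_step_def comb_def)

lemma nbrs_fin: "finite (nbrs n r x i)" by (simp add: nbrs_def)
lemma nbrs_sub: "nbrs n r x i \<subseteq> {..<n}" by (auto simp: nbrs_def)
lemma nbrs_self: "i < n \<Longrightarrow> 0 \<le> r i \<Longrightarrow> i \<in> nbrs n r x i" by (simp add: nbrs_def)

lemma avg_le: "finite A \<Longrightarrow> A \<noteq> {} \<Longrightarrow> (\<forall>j\<in>A. x j \<le> (M::real)) \<Longrightarrow> sum x A / real (card A) \<le> M"
proof -
  assume a: "finite A" "A \<noteq> {}" "\<forall>j\<in>A. x j \<le> M"
  have "sum x A \<le> of_nat (card A) * M" using a(3) sum_bounded_above[of A x M] by auto
  moreover have "real (card A) > 0" using a by auto
  ultimately show ?thesis by (simp add: pos_divide_le_eq mult.commute)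
qed

lemma avg_ge: "finite A \<Longrightarrow> A \<noteq> {} \<Longrightarrow> (\<forall>j\<in>A. (M::real) \<le> x j) \<Longrightarrow> M \<le> sum x A / real (card A)"
proof -
  assume a: "finite A" "A \<noteq> {}" "\<forall>j\<in>A. M \<le> x j"
  have "of_nat (card A) * M \<le> sum x A" using a(3) sum_bounded_below[of A M x] by auto
  moreover have "real (card A) > 0" using a by auto
  ultimately show ?thesis by (simp add: pos_le_divide_eq mult.commute)
qed

lemma ave_le: "0 < n \<Longrightarrow> (\<forall>j<n. x j \<le> M) \<Longrightarrow> x_ave n x \<le> M"
  unfolding x_ave_def using avg_le[of "{..<n}" x M] by auto
lemma ave_ge: "0 < n \<Longrightarrow> (\<forall>j<n. M \<le> x j) \<Longrightarrow> M \<le> x_ave n x"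
  unfolding x_ave_def using avg_ge[of "{..<n}" M x] by auto

lemma comb_le:
  assumes "i < n" "0 \<le> r i" "0 \<le> \<omega> i" "\<omega> i \<le> 1" "\<forall>j<n. x j \<le> M"
  shows "comb n r \<omega> x i \<le> M"
proof -
  have A: "x_ave n x \<le> M" using assms ave_le by auto
  have B: "(\<Sum>j\<in>nbrs n r x i. x j) / real (card (nbrs n r x i)) \<le> M"
    using assms nbrs_self[of i n r x] nbrs_sub[of n r x i] avg_le[of "nbrs n r x i" x M] by (auto simp: nbrs_fin)
  have "comb n r \<omega> x i \<le> \<omega> i * M + (1 - \<omega> i) * M" unfolding comb_def
    using A B assms by (intro add_mono mult_left_mono) auto
  thus ?thesis by (simp add: algebra_simps)
qed

lemma comb_ge:
  assumes "i < n" "0 \<le> r i" "0 \<le> \<omega> i" "\<omega> i \<le> 1" "\<forall>j<n. M \<le> x j"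
  shows "M \<le> comb n r \<omega> x i"
proof -
  have A: "M \<le> x_ave n x" using assms ave_ge by auto
  have B: "M \<le> (\<Sum>j\<in>nbrs n r x i. x j) / real (card (nbrs n r x i))"
    using assms nbrs_self[of i n r x] nbrs_sub[of n r x i] avg_ge[of "nbrs n r x i" M x] by (auto simp: nbrs_fin)
  have "\<omega> i * M + (1 - \<omega> i) * M \<le> comb n r \<omega> x i" unfolding comb_def
    using A B assms by (intro add_mono mult_left_mono) auto
  thus ?thesis by (simp add: algebra_simps)
qed

locale basics =
  fixes n :: nat and r \<omega> :: "nat \<Rightarrow> real"
  assumes npos: "0 < n" and rpos: "\<forall>i<n. 0 < r i \<and> r i \<le> 1" and wpos: "\<forall>i<n. 0 < \<omega> i \<and> \<omega> i < 1"
begin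

lemma step_down:
  assumes "i<n" "\<forall>j<n. x j \<le> M" "u i = -(\<eta>-\<delta>)" "\<bar>b i\<bar> \<le> \<delta>"
  shows "c3_step n r \<omega> x u b i \<le> proj01 (M - \<eta> + 2*\<delta>)"
proof -
  have "comb n r \<omega> x i \<le> M" using comb_le[of i n r \<omega> x M] assms rpos wpos by force
  thus ?thesis unfolding step_eq using assms by (intro proj01_mono) auto
qed

lemma step_up:
  assumes "i<n" "\<forall>j<n. M \<le> x j" "u i = \<eta>-\<delta>" "\<bar>b i\<bar> \<le> \<delta>"
  shows "proj01 (M + \<eta> - 2*\<delta>) \<le> c3_step n r \<omega> x u b i"
proof -
  have "M \<le> comb n r \<omega> x i" using comb_ge[of i n r \<omega> M x] assms rpos wpos by force
  thus ?thesis unfolding step_eq using assms by (intro proj01_mono) auto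
qed

lemma step_const:
  assumes "i<n" "\<forall>j<n. x j = 0" "u i = a" "\<bar>b i\<bar> \<le> \<delta>" "\<delta> \<le> a" "a + \<delta> \<le> 1"
  shows "a - \<delta> \<le> c3_step n r \<omega> x u b i \<and> c3_step n r \<omega> x u b i \<le> a + \<delta>"
proof -
  have "comb n r \<omega> x i \<le> 0" using comb_le[of i n r \<omega> x 0] assms rpos wpos by force
  moreover have "0 \<le> comb n r \<omega> x i" using comb_ge[of i n r \<omega> 0 x] assms rpos wpos by force
  ultimately have "comb n r \<omega> x i = 0" by linarith
  thus ?thesis unfolding step_eq using assms by (auto simp: proj01_def)
qed

lemma step_range: "0 \<le> c3_step n r \<omega> x u b i \<and> c3_step n r \<omega> x u b i \<le> 1"
  unfolding step_eq using proj01_range by auto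

lemma ave_upper:
  assumes "k<n" "\<forall>j<n. j\<noteq>k \<longrightarrow> x j \<le> z"
  shows "x_ave n x \<le> x k / real n + z * (real n - 1) / real n"
proof -
  have "(\<Sum>j<n. x j) = x k + (\<Sum>j\<in>{..<n}-{k}. x j)"
    using assms(1) by (simp add: sum.remove)
  also have "(\<Sum>j\<in>{..<n}-{k}. x j) \<le> (\<Sum>j\<in>{..<n}-{k}. z)"
    using assms by (intro sum_mono) auto
  also have "(\<Sum>j\<in>{..<n}-{k}. z) = (real n - 1) * z" using assms(1) by (simp add: of_nat_diff)
  finally have "(\<Sum>j<n. x j) \<le> x k + (real n - 1) * z" by simp
  hence "(\<Sum>j<n. x j) / real n \<le> (x k + (real n - 1) * z) / real n" using npos by (simp add: divide_right_mono)
  thus ?thesis unfolding x_ave_def by (simp add: add_divide_distrib mult.commute)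
qed

lemma ave_lower:
  assumes "k<n" "\<forall>j<n. 0 \<le> x j"
  shows "x k / real n \<le> x_ave n x"
proof -
  have "(\<Sum>j<n. x j) = x k + (\<Sum>j\<in>{..<n}-{k}. x j)"
    using assms(1) by (simp add: sum.remove)
  moreover have "0 \<le> (\<Sum>j\<in>{..<n}-{k}. x j)" using assms by (intro sum_nonneg) auto
  ultimately show ?thesis using npos unfolding x_ave_def by (simp add: divide_right_mono)
qed

lemma phase3_other:
  assumes "k<n" "\<forall>j<n. 0 \<le> x j" "\<forall>j<n. j\<noteq>k \<longrightarrow> x j \<le> 2*\<delta>"
    "r k + 2*\<delta> < x k" "4*\<delta> \<le> x k" "0 < \<delta>"
    "j<n" "j\<noteq>k" "u j = -(\<eta>-\<delta>)" "\<bar>b j\<bar> \<le> \<delta>" "x k / real n + 4*\<delta> - \<eta> \<le> 0"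
  shows "c3_step n r \<omega> x u b j = 0"
proof -
  let ?y = "x k"
  have av: "x_ave n x \<le> ?y / real n + 2*\<delta>"
  proof -
    have "x_ave n x \<le> ?y / real n + 2*\<delta> * (real n - 1) / real n" using ave_upper[of k x "2*\<delta>"] assms by auto
    also have "2*\<delta> * (real n - 1) / real n \<le> 2*\<delta>"
    proof -
      have "2*\<delta> * (real n - 1) \<le> 2*\<delta> * real n" using assms(6) by simp
      thus ?thesis using npos by (simp add: pos_divide_le_eq)
    qed
    finally show ?thesis by simp
  qed
  have L: "(\<Sum>l\<in>nbrs n r x j. x l) / real (card (nbrs n r x j)) \<le> ?y / real n + 2*\<delta>"
  proof (cases "k \<in> nbrs n r x j")
    case True
    have "nbrs n r x j = {..<n}"
    proof
      show "nbrs n r x j \<subseteq> {..<n}" by (rule nbrs_sub)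
      show "{..<n} \<subseteq> nbrs n r x j"
      proof
        fix l assume l: "l \<in> {..<n}"
        show "l \<in> nbrs n r x j"
        proof (cases "l = k")
          case True thus ?thesis using \<open>k \<in> nbrs n r x j\<close> by simp
        next
          case False
          have "\<bar>x k - x j\<bar> \<le> r j" using \<open>k \<in> nbrs n r x j\<close> by (simp add: nbrs_def)
          moreover have "\<bar>x l - x j\<bar> \<le> 2*\<delta>"
          proof -
            have "x l \<le> 2*\<delta>" "x j \<le> 2*\<delta>" "0 \<le> x l" "0 \<le> x j" using assms l False by auto
            thus ?thesis by (simp add: abs_le_iff)
          qed
          moreover have "2*\<delta> \<le> \<bar>x k - x j\<bar>" using assms by auto
          ultimately show ?thesis using l by (simp add: nbrs_def)
        qed
      qed
    qed
    thus ?thesis using av unfolding x_ave_def by simp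
  next
    case False
    have "\<forall>l\<in>nbrs n r x j. x l \<le> 2*\<delta>" using False assms(3) nbrs_sub by blast
    hence "(\<Sum>l\<in>nbrs n r x j. x l) / real (card (nbrs n r x j)) \<le> 2*\<delta>"
      using nbrs_self[of j n r x] assms rpos by (intro avg_le) (auto simp: nbrs_fin)
    moreover have "0 \<le> ?y / real n" using assms by auto
    ultimately show ?thesis by linarith
  qed
  have "comb n r \<omega> x j \<le> \<omega> j * (?y / real n + 2*\<delta>) + (1 - \<omega> j) * (?y / real n + 2*\<delta>)"
    unfolding comb_def using wpos assms av L by (intro add_mono mult_left_mono) auto
  also have "\<omega> j * (?y / real n + 2*\<delta>) + (1 - \<omega> j) * (?y / real n + 2*\<delta>) = ?y / real n + 2*\<delta>"
    by (simp only: left_diff_distrib) simp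
  finally have "comb n r \<omega> x j \<le> ?y / real n + 2*\<delta>" .
  hence "comb n r \<omega> x j + u j + b j \<le> 0" using assms by auto
  thus ?thesis unfolding step_eq by (rule proj01_neg)
qed

lemma phase3_k:
  assumes "k<n" "\<forall>j<n. 0 \<le> x j" "\<forall>j<n. j\<noteq>k \<longrightarrow> x j \<le> 2*\<delta>"
    "r k + 2*\<delta> < x k" "u k = \<eta>-\<delta>" "\<bar>b k\<bar> \<le> \<delta>"
  shows "proj01 (\<omega> k * (x k / real n) + (1 - \<omega> k) * x k + \<eta> - 2*\<delta>) \<le> c3_step n r \<omega> x u b k"
proof -
  have N: "nbrs n r x k = {k}"
  proof
    show "{k} \<subseteq> nbrs n r x k" using nbrs_self[of k n r x] assms rpos by auto
    show "nbrs n r x k \<subseteq> {k}"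
    proof
      fix l assume l: "l \<in> nbrs n r x k"
      show "l \<in> {k}"
      proof (rule ccontr)
        assume "l \<notin> {k}"
        hence "x l \<le> 2*\<delta>" "l < n" using assms l by (auto simp: nbrs_def)
        moreover have "\<bar>x l - x k\<bar> \<le> r k" using l by (simp add: nbrs_def)
        ultimately show False using assms by auto
      qed
    qed
  qed
  have "\<omega> k * (x k / real n) + (1 - \<omega> k) * x k \<le> comb n r \<omega> x k"
  proof -
    have "\<omega> k * (x k / real n) \<le> \<omega> k * x_ave n x" using ave_lower[of k x] assms wpos by (intro mult_left_mono) auto
    thus ?thesis unfolding comb_def N by simp
  qed
  thus ?thesis unfolding step_eq using assms by (intro proj01_mono) auto
qed

end

lemma hist_len: "length (c3_hist n r \<omega> \<sigma> b x0 t) = Suc t"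
  by (induction t) (simp_all add: Let_def)

lemma traj0: "c3_traj n r \<omega> \<sigma> b x0 0 = x0"
  by (simp add: c3_traj_def)

lemma trajSuc: "c3_traj n r \<omega> \<sigma> b x0 (Suc t) =
   c3_step n r \<omega> (c3_traj n r \<omega> \<sigma> b x0 t) (snd (\<sigma> (c3_hist n r \<omega> \<sigma> b x0 t))) (b t)"
  by (simp add: c3_traj_def Let_def)

lemma inE:
  assumes "in_cube n x" "i<n" "j<n" "c \<le> \<bar>x i - x j\<bar>"
  shows "x \<in> E_set n c"
proof -
  have fin: "finite {\<bar>x i - x j\<bar> | i j. i < n \<and> j < n}"
    by (rule finite_image_set2) auto
  have "\<bar>x i - x j\<bar> \<le> Max {\<bar>x i - x j\<bar> | i j. i < n \<and> j < n}"
    using assms by (intro Max_ge[OF fin]) auto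
  thus ?thesis using assms unfolding E_set_def by auto
qed

theorem lemma5:
  fixes n :: nat and r \<omega> :: "nat \<Rightarrow> real" and \<eta> \<epsilon> :: real
  assumes "n \<ge> 3"
    and "\<forall>i<n. 0 < r i \<and> r i \<le> 1"
    and "\<forall>i<n. 0 < \<omega> i \<and> \<omega> i < 1"
    and "\<eta> > 0"
    and "Min (r ` {..<n}) < 1"
    and "\<eta> > Min (r ` {..<n}) / 2"
    and "\<epsilon> > 0"
  shows "robustly_reachable n r \<omega> \<eta>
           (E_set n (min (real n * \<eta> / ((real n - 1) * Min {\<omega> i | i. i < n \<and> r i < 2 * \<eta>}) - \<epsilon>)
                        (min (real n * \<eta> - \<epsilon>) 1)))"
proof -
  interpret basics n r \<omega> using assms by unfold_locales auto
  define \<omega>l where "\<omega>l = Min {\<omega> i | i. i < n \<and> r i < 2 * \<eta>}"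
  define c where "c = min (real n * \<eta> / ((real n - 1) * \<omega>l) - \<epsilon>) (min (real n * \<eta> - \<epsilon>) 1)"
  define S where "S = E_set n c"
  have finW: "finite {\<omega> i | i. i < n \<and> r i < 2 * \<eta>}"
    by (rule finite_image_set) auto
  have "Min (r ` {..<n}) \<in> r ` {..<n}" using npos by (intro Min_in) auto
  then obtain i0 where i0: "i0 < n" "r i0 = Min (r ` {..<n})" by (metis imageE lessThan_iff)
  have "r i0 < 2 * \<eta>" using i0 assms(6) by simp
  hence neW: "{\<omega> i | i. i < n \<and> r i < 2 * \<eta>} \<noteq> {}" using i0 by auto
  obtain k where k: "k < n" "r k < 2 * \<eta>" "\<omega> k = \<omega>l"
    using Min_in[OF finW neW] unfolding \<omega>l_def by auto
  have wk: "0 < \<omega> k" "\<omega> k < 1" "0 < r k" "r k \<le> 1" using k assms(2,3) by auto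
  have n3: "real n \<ge> 3" using assms(1) by simp
  define w where "w = \<omega> k * (real n - 1) / real n"
  have wpos: "0 < w" unfolding w_def using wk n3 by simp
  have wid: "w * (real n * \<eta> / ((real n - 1) * \<omega>l)) = \<eta>"
    unfolding w_def k(3)[symmetric] using wk n3 by (simp add: field_simps)
  have c1: "c \<le> real n * \<eta> / ((real n - 1) * \<omega>l) - \<epsilon>" "c \<le> real n * \<eta> - \<epsilon>" "c \<le> 1"
    unfolding c_def by auto
  define \<delta> where "\<delta> = (if \<eta> > 1/2 then min (1/4) ((\<eta> - 1/2)/4)
      else min (\<eta>/4) (min ((2*\<eta> - r k)/7) (min (\<epsilon>/(2+4*real n)) (w*\<epsilon>/(4*(1+w))))))"
  define \<kappa> where "\<kappa> = w * \<epsilon> / 2"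
  define a where "a = (if \<eta> > 1/2 then 1/2 else \<eta> - \<delta>)"
  have dpos: "0 < \<delta>" unfolding \<delta>_def using assms(4,7) wpos k(2) n3 by auto
  have dlt: "2 * \<delta> < \<eta>" unfolding \<delta>_def using assms(4) by auto
  have dc1: "\<delta> \<le> 1/4 \<and> \<delta> \<le> (\<eta> - 1/2)/4" if "\<eta> > 1/2"
  proof -
    have e: "\<delta> = min (1/4) ((\<eta> - 1/2)/4)" unfolding \<delta>_def using that by (simp only: if_P)
    show ?thesis unfolding e by (meson min.cobounded1 min.cobounded2 order.trans)
  qed
  have dc2: "\<delta> \<le> \<eta>/4 \<and> \<delta> \<le> (2*\<eta> - r k)/7 \<and> \<delta> \<le> \<epsilon>/(2+4*real n) \<and> \<delta> \<le> w*\<epsilon>/(4*(1+w))"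
    if "\<not> \<eta> > 1/2"
  proof -
    have e: "\<delta> = min (\<eta>/4) (min ((2*\<eta> - r k)/7) (min (\<epsilon>/(2+4*real n)) (w*\<epsilon>/(4*(1+w)))))"
      unfolding \<delta>_def using that by (simp only: if_not_P if_False)
    show ?thesis unfolding e by (meson min.cobounded1 min.cobounded2 order.trans)
  qed
  have aok: "\<delta> \<le> a" "a + \<delta> \<le> 1" "a \<le> \<eta> - \<delta>" "0 \<le> a"
    unfolding a_def using dc1 dc2 dpos by (cases "\<eta> > 1/2"; simp; linarith)+
  define N0 where "N0 = nat \<lceil>1 / (\<eta> - 2*\<delta>)\<rceil>"
  define M3 where "M3 = nat \<lceil>1 / \<kappa>\<rceil> + 1"
  define T where "T = N0 + 2 + M3"
  define U where "U = (\<lambda>t (i::nat). if t < N0 then -(\<eta>-\<delta>) else if t = N0 then a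
                         else if i = k then \<eta> - \<delta> else -(\<eta>-\<delta>))"
  define \<sigma> where "\<sigma> = (\<lambda>h::(nat\<Rightarrow>real) list. ((\<lambda>_::nat. \<delta>), U (length h - 1)))"
  have adm: "admissible_strategy n \<eta> \<delta> \<sigma>"
    unfolding admissible_strategy_def \<sigma>_def U_def using aok dlt dpos by auto
  have main: "\<exists>t. 1 \<le> t \<and> t \<le> T \<and> c3_traj n r \<omega> \<sigma> b x0 t \<in> S"
    if x0: "in_cube n x0" and bad: "admissible_uncertainty n r \<omega> \<sigma> x0 T b" for x0 b
  proof -
    define X where "X = c3_traj n r \<omega> \<sigma> b x0"
    have bb: "\<bar>b t i\<bar> \<le> \<delta>" if "t < T" "i < n" for t i
      using bad that unfolding admissible_uncertainty_def \<sigma>_def by auto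
    have Xs: "X (Suc t) = c3_step n r \<omega> (X t) (U t) (b t)" for t
      unfolding X_def trajSuc \<sigma>_def hist_len by simp
    have cube: "\<forall>i<n. 0 \<le> X t i \<and> X t i \<le> 1" for t
    proof (cases t)
      case 0 thus ?thesis using x0 by (simp add: X_def traj0 in_cube_def)
    next
      case (Suc t') thus ?thesis using Xs step_range by auto
    qed
    have cubeX: "in_cube n (X t)" for t using cube unfolding in_cube_def by auto
    have Ud: "U t i = -(\<eta>-\<delta>)" if "t < N0" for t i using that by (simp add: U_def)
    have Ua: "U N0 i = a" for i by (simp add: U_def)
    have Uk: "U t k = \<eta> - \<delta>" if "N0 < t" for t using that by (simp add: U_def)
    have Uo: "U t i = -(\<eta>-\<delta>)" if "N0 < t" "i \<noteq> k" for t i using that by (simp add: U_def)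
    have TN: "N0 + 2 \<le> T" by (simp add: T_def)
    obtain j0 where j0: "j0 < n" "j0 \<noteq> k" using assms(1) k(1)
      by (metis One_nat_def Suc_le_lessD less_trans_Suc neq0_conv numeral_3_eq_3 zero_less_Suc)
    define d where "d = \<eta> - 2*\<delta>"
    have dp: "0 < d" using dlt by (simp add: d_def)
    have ph0: "\<forall>i<n. X t i \<le> max 0 (1 - real t * d)" if "t \<le> N0" for t
      using that
    proof (induction t)
      case 0 thus ?case using cube by simp
    next
      case (Suc t)
      hence IH: "\<forall>j<n. X t j \<le> max 0 (1 - real t * d)" and lt: "t < N0" by auto
      show ?case
      proof (intro allI impI)
        fix i assume i: "i < n"
        have "X (Suc t) i \<le> proj01 (max 0 (1 - real t * d) - \<eta> + 2*\<delta>)"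
          unfolding Xs using step_down[where x="X t" and M="max 0 (1 - real t * d)" and u="U t" and b="b t"]
            i IH Ud[OF lt] bb[of t i] lt TN by auto
        also have "\<dots> \<le> max 0 (max 0 (1 - real t * d) - \<eta> + 2*\<delta>)" by (rule proj01_le_max)
        also have "\<dots> \<le> max 0 (1 - real (Suc t) * d)"
        proof -
          have e1: "max 0 (1 - real t * d) - \<eta> + 2*\<delta> = max 0 (1 - real t * d) - d" by (simp add: d_def)
          have e2: "real (Suc t) * d = real t * d + d" by (simp add: algebra_simps)
          show ?thesis unfolding e1 e2 using dp by (auto simp: max_def)
        qed
        finally show "X (Suc t) i \<le> max 0 (1 - real (Suc t) * d)" .
      qed
    qed
    have "1/d \<le> real N0" unfolding N0_def d_def by (simp add: real_nat_ceiling_ge)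
    hence "1 \<le> real N0 * d" using dp by (simp add: pos_divide_le_eq mult.commute)
    hence X0: "\<forall>i<n. X N0 i = 0" using ph0[of N0] cube[of N0] by (auto simp: max_def) (smt (verit))
    have X1: "\<forall>i<n. a - \<delta> \<le> X (Suc N0) i \<and> X (Suc N0) i \<le> a + \<delta>"
      unfolding Xs using step_const[where x="X N0" and u="U N0" and b="b N0"] X0 Ua aok bb[of N0] TN by auto
    have Xk2: "proj01 (a - \<delta> + \<eta> - 2*\<delta>) \<le> X (Suc (Suc N0)) k"
      unfolding Xs[of "Suc N0"] using step_up[where x="X (Suc N0)" and M="a - \<delta>" and \<eta>=\<eta> and \<delta>=\<delta> and u="U (Suc N0)" and b="b (Suc N0)"]
        X1 Uk[of "Suc N0"] k(1) bb[of "Suc N0" k] TN by auto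
    have Xo2: "X (Suc (Suc N0)) j \<le> proj01 (a + \<delta> - \<eta> + 2*\<delta>)" if "j < n" "j \<noteq> k" for j
      unfolding Xs[of "Suc N0"] using step_down[where x="X (Suc N0)" and M="a + \<delta>" and \<eta>=\<eta> and \<delta>=\<delta> and u="U (Suc N0)" and b="b (Suc N0)"]
        X1 Uo[of "Suc N0" j] that bb[of "Suc N0" j] TN by auto
    define t0 where "t0 = Suc (Suc N0)"
    show ?thesis
    proof (cases "\<eta> > 1/2")
      case True
      have "a = 1/2" using True by (simp add: a_def)
      have "1 \<le> a - \<delta> + \<eta> - 2*\<delta>" using dc1[OF True, THEN conjunct2] dpos \<open>a = 1/2\<close> by (simp add: field_simps)
      moreover have "a + \<delta> - \<eta> + 2*\<delta> \<le> 0" using dc1[OF True, THEN conjunct2] dpos \<open>a = 1/2\<close> by (simp add: field_simps)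
      ultimately have p1: "proj01 (a - \<delta> + \<eta> - 2*\<delta>) = 1" "proj01 (a + \<delta> - \<eta> + 2*\<delta>) = 0"
        using proj01_one proj01_neg by auto
      have "X t0 k = 1" using Xk2 p1 cube[of t0] k(1) unfolding t0_def by force
      moreover have "X t0 j0 = 0" using Xo2[OF j0] p1 cube[of t0] j0 unfolding t0_def by force
      ultimately have "X t0 \<in> S" unfolding S_def using inE[OF cubeX k(1) j0(1)] c1 by auto
      thus ?thesis using TN unfolding X_def t0_def by (intro exI[of _ "Suc (Suc N0)"]) auto
    next
      case False
      have dd: "\<delta> \<le> \<eta>/4" "\<delta> \<le> (2*\<eta> - r k)/7" "\<delta> \<le> \<epsilon>/(2+4*real n)" "\<delta> \<le> w*\<epsilon>/(4*(1+w))"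
        using dc2[OF False] by blast+
      have aeq: "a = \<eta> - \<delta>" using False by (simp add: a_def)
      have eh: "2*\<eta> \<le> 1" using False by simp
      have d4: "4*\<delta> \<le> \<eta>" using dd(1) by (simp add: field_simps)
      have d7: "7*\<delta> \<le> 2*\<eta> - r k" using dd(2) by (simp add: field_simps)
      have "\<delta> * (2 + 4*real n) \<le> \<epsilon>" using dd(3) by (simp add: pos_le_divide_eq)
      moreover have "\<delta> * (2 + 4*real n) = 2*\<delta> + 4*(real n*\<delta>)" by (simp add: algebra_simps)
      ultimately have d5: "2*\<delta> + 4*(real n*\<delta>) \<le> \<epsilon>" by linarith
      have "\<delta> * (4*(1+w)) \<le> w*\<epsilon>" using dd(4) wpos by (simp add: pos_le_divide_eq)
      moreover have "\<delta> * (4*(1+w)) = 4*\<delta> + 4*(w*\<delta>)" by (simp add: algebra_simps)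
      ultimately have d6: "4*\<delta> + 4*(w*\<delta>) \<le> w*\<epsilon>" by linarith
      have kpos: "0 < \<kappa>" unfolding \<kappa>_def using wpos assms(7) by simp
      define Inv where "Inv x \<longleftrightarrow> (\<forall>j<n. j \<noteq> k \<longrightarrow> x j \<le> 2*\<delta>) \<and> r k + 2*\<delta> < x k \<and> 4*\<delta> \<le> x k"
        for x :: "nat \<Rightarrow> real"
      have Inv0: "Inv (X t0)"
      proof -
        have "proj01 (a - \<delta> + \<eta> - 2*\<delta>) = min 1 (2*\<eta> - 4*\<delta>)" using aeq d4 dpos by (simp add: proj01_def)
        hence A: "min 1 (2*\<eta> - 4*\<delta>) \<le> X t0 k" using Xk2 unfolding t0_def by simp
        have "proj01 (a + \<delta> - \<eta> + 2*\<delta>) \<le> 2*\<delta>" using aeq dpos by (simp add: proj01_def)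
        hence B: "\<forall>j<n. j \<noteq> k \<longrightarrow> X t0 j \<le> 2*\<delta>" using Xo2 unfolding t0_def by force
        have C: "r k + 2*\<delta> < min 1 (2*\<eta> - 4*\<delta>)" using d7 eh dpos by simp
        have D: "4*\<delta> \<le> min 1 (2*\<eta> - 4*\<delta>)" using d4 eh by simp
        have "r k + 2*\<delta> < X t0 k" using A C by linarith
        moreover have "4*\<delta> \<le> X t0 k" using A D by linarith
        ultimately show ?thesis unfolding Inv_def using B by blast
      qed
      have P: "(\<exists>t. t0 \<le> t \<and> t \<le> t0 + m \<and> X t \<in> S) \<or> (Inv (X (t0+m)) \<and> real m * \<kappa> \<le> X (t0+m) k)"
        if "m \<le> M3" for m
        using that
      proof (induction m)
        case 0 thus ?case using Inv0 dpos by (auto simp: Inv_def)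
      next
        case (Suc m)
        hence IH: "(\<exists>t. t0 \<le> t \<and> t \<le> t0 + m \<and> X t \<in> S) \<or> (Inv (X (t0+m)) \<and> real m * \<kappa> \<le> X (t0+m) k)"
          and mlt: "m < M3" by auto
        show ?case
        proof (cases "\<exists>t. t0 \<le> t \<and> t \<le> t0 + m \<and> X t \<in> S")
          case True
          then obtain t where "t0 \<le> t" "t \<le> t0 + m" "X t \<in> S" by blast
          thus ?thesis by (intro disjI1 exI[of _ t]) auto
        next
          case False
          with IH have inv: "Inv (X (t0+m))" and mk: "real m * \<kappa> \<le> X (t0+m) k" by auto
          define t where "t = t0 + m"
          define y where "y = X t k"
          have nS: "X t \<notin> S" using False unfolding t_def by auto
          have abs: "\<bar>y - X t j0\<bar> < c"
          proof (rule ccontr)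
            assume "\<not> \<bar>y - X t j0\<bar> < c"
            hence "X t \<in> S" unfolding S_def y_def using inE[OF cubeX k(1) j0(1)] by auto
            with nS show False by simp
          qed
          have invt: "\<forall>j<n. j \<noteq> k \<longrightarrow> X t j \<le> 2*\<delta>" "r k + 2*\<delta> < y" "4*\<delta> \<le> y"
            using inv unfolding Inv_def t_def y_def by auto
          have "0 \<le> X t j0" using cube j0 by auto
          hence yc: "y < c + 2*\<delta>" using abs invt(1) j0 by (auto simp: abs_less_iff)
          have y0: "0 \<le> y" using invt dpos by linarith
          have tT: "t < T" "N0 < t" unfolding t_def t0_def T_def using mlt by auto
          have nb: "y / real n + 4*\<delta> - \<eta> \<le> 0"
          proof -
            have "y \<le> real n * \<eta> - 4*(real n*\<delta>)" using yc c1(2) d5 by linarith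
            also have "\<dots> = (\<eta> - 4*\<delta>) * real n" by (simp add: algebra_simps)
            finally have "y / real n \<le> \<eta> - 4*\<delta>" using npos by (simp add: pos_divide_le_eq)
            thus ?thesis by linarith
          qed
          have oth: "X (Suc t) j = 0" if "j<n" "j\<noteq>k" for j
            unfolding Xs[of t] using phase3_other[where x="X t" and u="U t" and b="b t" and \<delta>=\<delta> and \<eta>=\<eta> and k=k and j=j]
              that k(1) cube[of t] invt nb dpos Uo[OF tT(2) that(2)] bb[OF tT(1) that(1)] unfolding y_def by auto
          have kk: "proj01 (\<omega> k * (y / real n) + (1 - \<omega> k) * y + \<eta> - 2*\<delta>) \<le> X (Suc t) k"
            unfolding Xs[of t] y_def using phase3_k[where x="X t" and u="U t" and b="b t" and \<delta>=\<delta> and \<eta>=\<eta> and k=k]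
              k(1) cube[of t] invt Uk[OF tT(2)] bb[OF tT(1) k(1)] unfolding y_def by auto
          have num: "y + \<kappa> \<le> \<omega> k * (y / real n) + (1 - \<omega> k) * y + \<eta> - 2*\<delta>"
          proof -
            have e1: "\<omega> k * (y / real n) + (1 - \<omega> k) * y = y - w*y" unfolding w_def using npos by (simp add: field_simps)
            have "w*y \<le> w*(c + 2*\<delta>)" using yc wpos by (intro mult_left_mono) auto
            also have "\<dots> = w*c + 2*(w*\<delta>)" by (simp add: algebra_simps)
            also have "w*c \<le> w*(real n * \<eta> / ((real n - 1) * \<omega>l) - \<epsilon>)" using c1(1) wpos by (intro mult_left_mono) auto
            also have "w*(real n * \<eta> / ((real n - 1) * \<omega>l) - \<epsilon>) = \<eta> - w*\<epsilon>" using wid by (simp add: right_diff_distrib)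
            finally have "w*y \<le> \<eta> - w*\<epsilon> + 2*(w*\<delta>)" by simp
            thus ?thesis unfolding e1 \<kappa>_def using d6 by linarith
          qed
          have kk2: "min 1 (y + \<kappa>) \<le> X (Suc t) k"
            using kk proj01_mono[OF num] proj01_ge_min[of "y + \<kappa>"] y0 kpos by linarith
          have tS: "t0 + Suc m = Suc t" by (simp add: t_def)
          show ?thesis
          proof (cases "1 \<le> y + \<kappa>")
            case True
            hence "X (Suc t) k = 1" using kk2 cube[of "Suc t"] k(1) by force
            moreover have "X (Suc t) j0 = 0" using oth j0 by auto
            ultimately have "X (Suc t) \<in> S" unfolding S_def using inE[OF cubeX k(1) j0(1)] c1 by auto
            thus ?thesis by (intro disjI1 exI[of _ "Suc t"]) (auto simp: t_def)
          next
            case False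
            hence yk: "y + \<kappa> \<le> X (Suc t) k" using kk2 by simp
            have "Inv (X (Suc t))" unfolding Inv_def using oth yk invt kpos dpos by force
            moreover have "real (Suc m) * \<kappa> \<le> X (Suc t) k" using mk yk unfolding t_def y_def by (simp add: algebra_simps)
            ultimately show ?thesis using tS by simp
          qed
        qed
      qed
      have "real M3 * \<kappa> > 1"
      proof -
        have "1/\<kappa> \<le> real (nat \<lceil>1/\<kappa>\<rceil>)" by (simp add: real_nat_ceiling_ge)
        hence "1/\<kappa> + 1 \<le> real M3" unfolding M3_def by simp
        hence "(1/\<kappa> + 1) * \<kappa> \<le> real M3 * \<kappa>" using kpos by (intro mult_right_mono) auto
        thus ?thesis using kpos by (simp add: algebra_simps)
      qed
      hence "\<not> (real M3 * \<kappa> \<le> X (t0+M3) k)" using cube[of "t0+M3"] k(1) by force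
      then obtain t where "t0 \<le> t" "t \<le> t0 + M3" "X t \<in> S" using P[of M3] by auto
      thus ?thesis unfolding X_def t0_def T_def by (intro exI[of _ t]) auto
    qed
  qed
  show ?thesis
    unfolding robustly_reachable_def S_def[symmetric] \<omega>l_def[symmetric] c_def[symmetric]
    apply (rule exI[of _ T], rule exI[of _ \<delta>])
    using dpos dlt assms(4) adm main unfolding T_def by auto
qed

end
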